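(* Assume that $\varphi$ satisfies Conditions (C1), (C2), (C3), (C4) described in the context. Let $B$ be a non-empty ball contained in a connected component of $\Omega$ with $\operatorname{diam}B\le\frac12\operatorname{diam}B_0$, and let $\omega\subset\Omega$ be a bounded domain with infinitely differentiable boundary such that $B\subset\omega$. Then each coset $\mathbf U\in\Lambda(\Omega)$ contains a unique representative $u$ with $\langle u\rangle_B=0$, and this representative satisfies $$|\langle u\rangle_\omega|\le c_{11}\,|u|_{p,\omega},$$ where $c_{11}$ is a constant independent of $u$ but depending on $\omega$ and $B$. Here $\langle u\rangle_S:=\frac{1}{\operatorname{mes}S}\int_S u\,dx$.
   Context: Let $d\ge 1$ and let $\Omega\subseteq\mathbb R^d$ be a domain (open set, bounded or unbounded, possibly $\Omega=\mathbb R^d$). Functions are complex-valued. Let $a\in L_1(\mathbb R^d)$, $a\ge 0$, and suppose there is a non-empty ball $B_0$ centered at $0$ with $a(z)\ge c_0>0$ for a.e. $z\in B_0$. If $\Omega$ is not connected and $\Omega_1,\Omega_2,\dots$ are its connected components, assume $\operatorname{dist}(\Omega_i,\Omega_{i+1})<\operatorname{diam}B_0$ for all $i$. A real function $r$ on $[0,\infty)$ is almost increasing (resp. almost decreasing) with constant $\beta\ge1$ if $r(s)\le\beta r(t)$ (resp. $\beta r(s)\ge r(t)$) for all $0\le s\le t$. Let $\varphi:[0,\infty)\times\Omega\times\Omega\to[0,\infty)$. Conditions: (C1) for each $u\in L_{1,loc}(\Omega)$ the function $(x,y)\mapsto\varphi(|u(x)-u(y)|,x,y)$ is measurable on $\Omega\times\Omega$;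 (C2) for every $\varepsilon>0$ there is $\delta\in(0,1)$ such that $\varphi(\frac{s+t}{2},x,y)\le(1-\delta)\frac{\varphi(s,x,y)+\varphi(t,x,y)}{2}$ for a.e. $(x,y)$ and all $s,t>0$ with $|s-t|\ge\varepsilon\max\{s,t\}$; (C3) there are constants $1<p_-\le p_+$ and $\beta\ge1$ such that for a.e. $(x,y)$ the function $t\mapsto\varphi(t,x,y)/t^{p_-}$ is almost increasing with constant $\beta$ and $t\mapsto\varphi(t,x,y)/t^{p_+}$ is almost decreasing with constant $\beta$; (C4) for a.e. $(x,y)$: $c_1^{-1}\le\varphi(1,x,y)\le c_1$ with a constant $c_1>0$, $\varphi(0,x,y)=0$, and $\varphi(t,x,y)>0$ for $t>0$. For a domain $D\subseteq\Omega$ and $u\in L_{1,loc}(D)$: $F_D(u)=\int_{D\times D}\varphi(|u(x)-u(y)|,x,y)\,a(x-y)\,dx\,dy\in[0,+\infty]$ and $|u|_{p,D}=\inf\{\lambda>0: F_D(u/\lambda)\le1\}$. On $L_{1,loc}(\Omega)$ let $u\sim v$ iff $u-v$ is a.e. constant; $\Lambda(\Omega)$ is the space of cosets $\mathbf U$ with $|u|_{p,\Omega}<\infty$ for $u\in\mathbf U$. *)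

theory Defs
  imports "HOL-Analysis.Analysis"
begin

definition L1loc :: "'a::euclidean_space set \<Rightarrow> ('a \<Rightarrow> complex) \<Rightarrow> bool" where
  "L1loc D u \<longleftrightarrow> (\<forall>K. compact K \<and> K \<subseteq> D \<longrightarrow> set_integrable lebesgue K u)"

definition Ffun :: "(real \<Rightarrow> 'a \<Rightarrow> 'a \<Rightarrow> real) \<Rightarrow> ('a::euclidean_space \<Rightarrow> real)
    \<Rightarrow> 'a set \<Rightarrow> ('a \<Rightarrow> complex) \<Rightarrow> ennreal" where
  "Ffun \<phi> a D u = (\<integral>\<^sup>+ z. ennreal (\<phi> (cmod (u (fst z) - u (snd z))) (fst z) (snd z)
        * a (fst z - snd z)) \<partial>(lebesgue_on (D \<times> D)))"

text \<open>The Luxemburg-type seminorm |u|_{p,D}; value \<infinity> when the defining set is empty.\<close>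
definition pnorm :: "(real \<Rightarrow> 'a \<Rightarrow> 'a \<Rightarrow> real) \<Rightarrow> ('a::euclidean_space \<Rightarrow> real)
    \<Rightarrow> 'a set \<Rightarrow> ('a \<Rightarrow> complex) \<Rightarrow> ennreal" where
  "pnorm \<phi> a D u = Inf {ennreal l | l. l > 0 \<and> Ffun \<phi> a D (\<lambda>x. u x / of_real l) \<le> 1}"

definition coset_eq :: "'a::euclidean_space set \<Rightarrow> ('a \<Rightarrow> complex) \<Rightarrow> ('a \<Rightarrow> complex) \<Rightarrow> bool" where
  "coset_eq \<Omega> u v \<longleftrightarrow> (\<exists>c. AE x in lebesgue. x \<in> \<Omega> \<longrightarrow> u x - v x = c)"

definition in_Lambda :: "(real \<Rightarrow> 'a \<Rightarrow> 'a \<Rightarrow> real) \<Rightarrow> ('a::euclidean_space \<Rightarrow> real)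
    \<Rightarrow> 'a set \<Rightarrow> ('a \<Rightarrow> complex) \<Rightarrow> bool" where
  "in_Lambda \<phi> a \<Omega> u \<longleftrightarrow> L1loc \<Omega> u \<and> pnorm \<phi> a \<Omega> u < \<infinity>"

definition avg :: "'a::euclidean_space set \<Rightarrow> ('a \<Rightarrow> complex) \<Rightarrow> complex" where
  "avg S u = of_real (1 / measure lebesgue S) * set_lebesgue_integral lebesgue S u"

definition almost_incr_on :: "real set \<Rightarrow> real \<Rightarrow> (real \<Rightarrow> real) \<Rightarrow> bool" where
  "almost_incr_on S \<beta> r \<longleftrightarrow> (\<forall>s\<in>S. \<forall>t\<in>S. s \<le> t \<longrightarrow> r s \<le> \<beta> * r t)"

definition almost_decr_on :: "real set \<Rightarrow> real \<Rightarrow> (real \<Rightarrow> real) \<Rightarrow> bool" where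
  "almost_decr_on S \<beta> r \<longleftrightarrow> (\<forall>s\<in>S. \<forall>t\<in>S. s \<le> t \<longrightarrow> \<beta> * r s \<ge> r t)"

fun Ck_on :: "nat \<Rightarrow> 'a::euclidean_space set \<Rightarrow> ('a \<Rightarrow> real) \<Rightarrow> bool" where
  "Ck_on 0 U f = continuous_on U f"
| "Ck_on (Suc k) U f = (\<exists>f'. (\<forall>x\<in>U. (f has_derivative f' x) (at x)) \<and> (\<forall>v. Ck_on k U (\<lambda>x. f' x v)))"

definition smooth_boundary :: "'a::euclidean_space set \<Rightarrow> bool" where
  "smooth_boundary w \<longleftrightarrow> (\<forall>p\<in>frontier w. \<exists>U \<rho>. open U \<and> p \<in> U \<and> (\<forall>k. Ck_on k U \<rho>)
      \<and> w \<inter> U = {x\<in>U. \<rho> x < 0}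
      \<and> (\<forall>x\<in>U. \<exists>D. (\<rho> has_derivative D) (at x) \<and> D \<noteq> (\<lambda>v. 0)))"

end

theory Submission
  imports Defs
begin

lemma AE_lebesgue_pair_diff:
  fixes P :: "'a::euclidean_space \<Rightarrow> bool"
  assumes "AE x in lebesgue. P x"
  shows "AE z in (lebesgue :: ('a \<times> 'a) measure). P (fst z - snd z)"
proof -
  have "AE x in lborel. P x" using assms by (simp add: AE_completion_iff)
  from AE_E[OF this] obtain N where "{x \<in> space lborel. \<not> P x} \<subseteq> N" "emeasure lborel N = 0" "N \<in> sets lborel"
    by auto
  then have N: "N \<in> null_sets lborel" "{x. \<not> P x} \<subseteq> N" by auto
  define S where "S = {z::'a\<times>'a. fst z - snd z \<in> N}"
  have Nb: "N \<in> sets borel" using N by auto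
  have S_sets: "S \<in> sets (lborel \<Otimes>\<^sub>M lborel)"
  proof -
    have "(\<lambda>z::'a\<times>'a. fst z - snd z) \<in> borel_measurable borel"
      by (rule borel_measurable_continuous_onI) (intro continuous_intros)
    then have "(\<lambda>z::'a\<times>'a. fst z - snd z) -` N \<inter> space borel \<in> sets borel"
      using Nb by (rule measurable_sets)
    moreover have "sets (lborel \<Otimes>\<^sub>M lborel) = sets (borel :: ('a\<times>'a) measure)"
      by (simp only: lborel_prod sets_lborel)
    ultimately show ?thesis unfolding S_def by (simp add: vimage_def)
  qed
  have pre: "emeasure lborel (Pair x -` S) = 0" for x
  proof -
    have "lborel = density (distr lborel borel (\<lambda>y. x + (-1) *\<^sub>R y)) (\<lambda>_. \<bar>-1::real\<bar>^DIM('a))"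
      by (rule lborel_affine) simp
    then have "emeasure lborel N = emeasure (distr lborel borel (\<lambda>y::'a. x - y)) N"
      by (simp add: density_1)
    also have "\<dots> = emeasure lborel ((\<lambda>y. x - y) -` N)"
      using Nb by (subst emeasure_distr) auto
    finally show ?thesis using N unfolding S_def by (simp add: vimage_def null_sets_def)
  qed
  have "emeasure (lborel \<Otimes>\<^sub>M lborel) S = 0"
    using S_sets by (simp add: lborel.emeasure_pair_measure_alt pre)
  then have "S \<in> null_sets (lborel \<Otimes>\<^sub>M lborel)"
    using S_sets by (simp add: null_sets_def)
  then have "S \<in> null_sets (lborel :: ('a\<times>'a) measure)"
    by (simp only: lborel_prod)
  then have "AE z in (lborel :: ('a\<times>'a) measure). P (fst z - snd z)"
    by (rule AE_I') (use N in \<open>auto simp: S_def\<close>)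
  then show ?thesis by (simp add: AE_completion_iff)
qed

lemma AE_lebesgue_pair_fst:
  fixes P :: "'a::euclidean_space \<Rightarrow> bool"
  assumes "AE x in lebesgue. P x"
  shows "AE z in (lebesgue :: ('a \<times> 'a) measure). P (fst z)"
proof -
  have "AE x in lborel. P x" using assms by (simp add: AE_completion_iff)
  from AE_E[OF this] obtain N where "{x \<in> space lborel. \<not> P x} \<subseteq> N" "emeasure lborel N = 0" "N \<in> sets lborel"
    by auto
  then have N: "N \<in> null_sets lborel" "{x. \<not> P x} \<subseteq> N" by auto
  have "emeasure (lborel \<Otimes>\<^sub>M lborel) (N \<times> (UNIV::'a set)) = 0"
    using N by (subst lborel.emeasure_pair_measure_Times) (auto simp: null_sets_def)
  then have "N \<times> (UNIV::'a set) \<in> null_sets (lborel :: ('a\<times>'a) measure)"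
    using N by (simp add: lborel_prod[symmetric] null_sets_def)
  then have "AE z in (lborel :: ('a\<times>'a) measure). P (fst z)"
    by (rule AE_I') (use N in auto)
  then show ?thesis by (simp add: AE_completion_iff)
qed

lemma AE_lebesgue_pair_snd:
  fixes P :: "'a::euclidean_space \<Rightarrow> bool"
  assumes "AE x in lebesgue. P x"
  shows "AE z in (lebesgue :: ('a \<times> 'a) measure). P (snd z)"
proof -
  have "AE x in lborel. P x" using assms by (simp add: AE_completion_iff)
  from AE_E[OF this] obtain N where "{x \<in> space lborel. \<not> P x} \<subseteq> N" "emeasure lborel N = 0" "N \<in> sets lborel"
    by auto
  then have N: "N \<in> null_sets lborel" "{x. \<not> P x} \<subseteq> N" by auto
  have "emeasure (lborel \<Otimes>\<^sub>M lborel) ((UNIV::'a set) \<times> N) = 0"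
    using N by (subst lborel.emeasure_pair_measure_Times) (auto simp: null_sets_def)
  then have "(UNIV::'a set) \<times> N \<in> null_sets (lborel :: ('a\<times>'a) measure)"
    using N by (simp add: lborel_prod[symmetric] null_sets_def)
  then have "AE z in (lborel :: ('a\<times>'a) measure). P (snd z)"
    by (rule AE_I') (use N in auto)
  then show ?thesis by (simp add: AE_completion_iff)
qed

lemma phi_growth:
  fixes t pm \<beta> c1 p1 pt :: real
  assumes "t \<ge> 1" "pm > 1" "\<beta> \<ge> 1" "c1 > 0"
    and inc: "p1 / 1 powr pm \<le> \<beta> * (pt / t powr pm)"
    and low: "inverse c1 \<le> p1"
  shows "t \<le> \<beta> * c1 * pt"
proof -
  have tp: "t powr pm > 0" using assms by simp
  have "inverse c1 \<le> \<beta> * (pt / t powr pm)" using inc low by simp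
  then have "inverse c1 * t powr pm \<le> \<beta> * pt"
    using tp by (simp add: field_simps)
  then have "t powr pm \<le> \<beta> * c1 * pt"
    using assms by (simp add: field_simps)
  moreover have "t \<le> t powr pm"
    using powr_mono[of 1 pm t] assms by simp
  ultimately show ?thesis by linarith
qed

lemma energy_bound:
  fixes \<phi> :: "real \<Rightarrow> 'a::euclidean_space \<Rightarrow> 'a \<Rightarrow> real" and a :: "'a \<Rightarrow> real"
    and w g :: "'a \<Rightarrow> complex" and D D1 D2 \<Omega> :: "'a set"
  assumes a_nonneg: "\<And>z. a z \<ge> 0" and c0: "c0 > 0"
    and a_lower: "AE z in lebesgue. z \<in> ball 0 r0 \<longrightarrow> a z \<ge> c0"
    and \<phi>_nonneg: "\<And>t x y. t \<ge> 0 \<Longrightarrow> x \<in> \<Omega> \<Longrightarrow> y \<in> \<Omega> \<Longrightarrow> \<phi> t x y \<ge> 0"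
    and pm: "pm > 1" and \<beta>: "\<beta> \<ge> 1" and c1: "c1 > 0"
    and AEphi: "AE z in lebesgue. z \<in> \<Omega> \<times> \<Omega> \<longrightarrow>
         almost_incr_on {0<..} \<beta> (\<lambda>t. \<phi> t (fst z) (snd z) / t powr pm) \<and> inverse c1 \<le> \<phi> 1 (fst z) (snd z)"
    and D: "open D" "D \<subseteq> \<Omega>" and D1: "open D1" "D1 \<subseteq> D" "bounded D1"
    and D2: "open D2" "D2 \<subseteq> D" "bounded D2"
    and close: "\<And>x y. x \<in> D1 \<Longrightarrow> y \<in> D2 \<Longrightarrow> dist x y < r0"
    and lam: "l > 0" and F: "Ffun \<phi> a D (\<lambda>x. w x / of_real l) \<le> 1"
    and g: "g \<in> borel_measurable borel" and wg: "AE x in lebesgue. x \<in> D1 \<union> D2 \<longrightarrow> w x = g x"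
  shows "(\<integral>\<^sup>+x. \<integral>\<^sup>+y. indicator D1 x * indicator D2 y * ennreal (cmod (g x - g y)) \<partial>lborel \<partial>lborel)
     \<le> ennreal (l * (measure lebesgue D1 * measure lebesgue D2 + \<beta> * c1 / c0))"
proof -
  define K where "K = \<beta> * c1 / c0"
  have K: "K > 0" using \<beta> c1 c0 by (simp add: K_def)
  define tg where "tg z = cmod (g (fst z) - g (snd z)) / l" for z :: "'a \<times> 'a"
  define h1 where "h1 z = indicator (D1 \<times> D2) z * ennreal (min (tg z) 1)" for z
  define h2 where "h2 z = indicator (D1 \<times> D2) z * ennreal (max (tg z - 1) 0 / K)" for z
  define f where "f z = indicator (D \<times> D) z * ennreal (\<phi> (cmod (w (fst z) / of_real l - w (snd z) / of_real l)) (fst z) (snd z)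
        * a (fst z - snd z))" for z
  have gm[measurable]: "g \<in> borel_measurable lborel" using g by simp
  have D1b[measurable]: "D1 \<in> sets lborel" and D2b[measurable]: "D2 \<in> sets lborel"
    using D1 D2 by auto
  have tg_m[measurable]: "tg \<in> borel_measurable (lborel \<Otimes>\<^sub>M lborel)"
    unfolding tg_def by measurable
  have h1m[measurable]: "h1 \<in> borel_measurable (lborel \<Otimes>\<^sub>M lborel)"
    unfolding h1_def by measurable
  have h2m[measurable]: "h2 \<in> borel_measurable (lborel \<Otimes>\<^sub>M lborel)"
    unfolding h2_def by measurable
  have tg_nn: "tg z \<ge> 0" for z using lam by (simp add: tg_def)
  have split: "indicator D1 x * indicator D2 y * ennreal (cmod (g x - g y)) = ennreal l * (h1 (x,y) + ennreal K * h2 (x,y))" for x y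
  proof -
    have e1: "ennreal K * ennreal (max (tg (x,y) - 1) 0 / K) = ennreal (max (tg (x,y) - 1) 0)"
      using K by (simp add: ennreal_mult[symmetric])
    have "ennreal (min (tg (x,y)) 1) + ennreal (max (tg (x,y) - 1) 0) = ennreal (min (tg (x,y)) 1 + max (tg (x,y) - 1) 0)"
      using tg_nn[of "(x,y)"] by (intro ennreal_plus[symmetric]) auto
    also have "min (tg (x,y)) 1 + max (tg (x,y) - 1) 0 = tg (x,y)"
      by (auto simp: min_def max_def)
    finally have e2: "ennreal (min (tg (x,y)) 1) + ennreal K * ennreal (max (tg (x,y) - 1) 0 / K) = ennreal (tg (x,y))"
      using e1 by simp
    have "ennreal (cmod (g x - g y)) = ennreal l * ennreal (tg (x,y))"
      using lam by (simp add: tg_def ennreal_mult[symmetric])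
    then show ?thesis
      unfolding h1_def h2_def by (cases "x \<in> D1 \<and> y \<in> D2") (simp_all add: e2 indicator_def)
  qed
  have cmod_eq: "cmod (w x / of_real l - w y / of_real l) = cmod (w x - w y) / l" for x y
  proof -
    have "w x / of_real l - w y / of_real l = (w x - w y) / of_real l" by (simp add: diff_divide_distrib)
    then show ?thesis using lam by (simp add: norm_divide)
  qed
  have ae1: "AE z in (lebesgue :: ('a\<times>'a) measure). fst z \<in> D1 \<union> D2 \<longrightarrow> w (fst z) = g (fst z)"
    using AE_lebesgue_pair_fst[OF wg] .
  have ae2: "AE z in (lebesgue :: ('a\<times>'a) measure). snd z \<in> D1 \<union> D2 \<longrightarrow> w (snd z) = g (snd z)"
    using AE_lebesgue_pair_snd[OF wg] .
  have ae3: "AE z in (lebesgue :: ('a\<times>'a) measure). fst z - snd z \<in> ball 0 r0 \<longrightarrow> a (fst z - snd z) \<ge> c0"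
    using AE_lebesgue_pair_diff[OF a_lower] .
  have h2f: "AE z in (lebesgue :: ('a\<times>'a) measure). h2 z \<le> f z"
    using ae1 ae2 ae3 AEphi
  proof eventually_elim
    case (elim z)
    obtain x y where z: "z = (x,y)" by fastforce
    show ?case
    proof (cases "x \<in> D1 \<and> y \<in> D2")
      case False
      then show ?thesis by (simp add: h2_def z)
    next
      case True
      then have xy: "x \<in> D" "y \<in> D" "x \<in> \<Omega>" "y \<in> \<Omega>" using D1 D2 D by auto
      have wx: "w x = g x" and wy: "w y = g y" using elim True z by auto
      define t where "t = tg (x,y)"
      have t_eq: "cmod (w x / of_real l - w y / of_real l) = t"
        using cmod_eq[of x y] unfolding wx wy by (simp add: t_def tg_def)
      have phin: "\<phi> t x y \<ge> 0" using \<phi>_nonneg[OF tg_nn xy(3,4)] by (simp add: t_def)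
      have ac0: "a (x - y) \<ge> c0"
        using elim(3) close[OF conjunct1[OF True] conjunct2[OF True]] z by (simp add: dist_norm norm_minus_commute)
      have main: "max (t - 1) 0 / K \<le> \<phi> t x y * a (x - y)"
      proof (cases "t \<ge> 1")
        case False
        then have "max (t - 1) 0 / K = 0" by simp
        then show ?thesis using phin a_nonneg[of "x - y"] by (simp only:) simp
      next
        case True
        have inc: "almost_incr_on {0<..} \<beta> (\<lambda>t. \<phi> t x y / t powr pm)" and low: "inverse c1 \<le> \<phi> 1 x y"
          using elim(4) xy z by auto
        have "\<phi> 1 x y / 1 powr pm \<le> \<beta> * (\<phi> t x y / t powr pm)"
          using inc True unfolding almost_incr_on_def
          by (metis greaterThan_iff less_numeral_extra(1) order_less_le_trans times_divide_eq_right)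
        then have tb: "t \<le> \<beta> * c1 * \<phi> t x y"
          using phi_growth[OF True pm \<beta> c1 _ low] by simp
        have "max (t - 1) 0 / K \<le> t / K" using True K by (simp add: divide_right_mono)
        also have "\<dots> \<le> c0 * \<phi> t x y" using tb K c0 by (simp add: K_def field_simps)
        also have "\<dots> \<le> \<phi> t x y * a (x - y)" using ac0 phin by (metis mult.commute mult_right_mono)
        finally show ?thesis .
      qed
      have fz: "f z = ennreal (\<phi> t x y * a (x - y))"
        using True xy unfolding f_def z fst_conv snd_conv t_eq by simp
      have hz: "h2 z = ennreal (max (t - 1) 0 / K)"
        using True unfolding h2_def z t_def by simp
      show ?thesis
        unfolding fz hz using main by (rule ennreal_leI)
    qed
  qed
  have DD: "D \<times> D \<in> sets (lebesgue :: ('a\<times>'a) measure)"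
  proof -
    have "open (D \<times> D)" using D by (simp add: open_Times)
    then have "D \<times> D \<in> sets (lborel :: ('a\<times>'a) measure)" by simp
    then show ?thesis by (rule sets_completionI_sets)
  qed
  have Ff: "(\<integral>\<^sup>+z. f z \<partial>(lebesgue :: ('a\<times>'a) measure)) = Ffun \<phi> a D (\<lambda>x. w x / of_real l)"
    unfolding Ffun_def f_def using DD
    by (subst nn_integral_restrict_space) (auto simp: mult.commute)
  have I2: "(\<integral>\<^sup>+z. h2 z \<partial>(lborel \<Otimes>\<^sub>M lborel)) \<le> 1"
  proof -
    have "(\<integral>\<^sup>+z. h2 z \<partial>(lborel \<Otimes>\<^sub>M lborel)) = (\<integral>\<^sup>+z. h2 z \<partial>(lebesgue :: ('a\<times>'a) measure))"
      by (simp only: lborel_prod nn_integral_completion)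
    also have "\<dots> \<le> (\<integral>\<^sup>+z. f z \<partial>(lebesgue :: ('a\<times>'a) measure))"
      by (rule nn_integral_mono_AE[OF h2f])
    also have "\<dots> \<le> 1" using Ff F by simp
    finally show ?thesis .
  qed
  have m1: "emeasure lborel D1 = ennreal (measure lebesgue D1)"
  proof -
    have "D1 \<in> sets lborel" using D1 by simp
    moreover have "D1 \<in> lmeasurable" using D1 by (intro bounded_set_imp_lmeasurable) auto
    ultimately show ?thesis using emeasure_completion[of D1 lborel] emeasure_eq_measure2[of D1 lebesgue] by simp
  qed
  have m2: "emeasure lborel D2 = ennreal (measure lebesgue D2)"
  proof -
    have "D2 \<in> sets lborel" using D2 by simp
    moreover have "D2 \<in> lmeasurable" using D2 by (intro bounded_set_imp_lmeasurable) auto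
    ultimately show ?thesis using emeasure_completion[of D2 lborel] emeasure_eq_measure2[of D2 lebesgue] by simp
  qed
  have I1: "(\<integral>\<^sup>+z. h1 z \<partial>(lborel \<Otimes>\<^sub>M lborel)) \<le> ennreal (measure lebesgue D1 * measure lebesgue D2)"
  proof -
    have "(\<integral>\<^sup>+z. h1 z \<partial>(lborel \<Otimes>\<^sub>M lborel)) \<le> (\<integral>\<^sup>+z. indicator (D1 \<times> D2) z \<partial>(lborel \<Otimes>\<^sub>M lborel))"
      by (rule nn_integral_mono) (auto simp: h1_def indicator_def)
    also have "\<dots> = emeasure (lborel \<Otimes>\<^sub>M lborel) (D1 \<times> D2)"
      by (rule nn_integral_indicator, rule pair_measureI[OF D1b D2b])
    also have "\<dots> = emeasure lborel D1 * emeasure lborel D2"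
      by (rule lborel.emeasure_pair_measure_Times) (use D1 D2 in auto)
    also have "\<dots> = ennreal (measure lebesgue D1 * measure lebesgue D2)"
      by (simp add: m1 m2 ennreal_mult)
    finally show ?thesis .
  qed
  have "(\<integral>\<^sup>+x. \<integral>\<^sup>+y. indicator D1 x * indicator D2 y * ennreal (cmod (g x - g y)) \<partial>lborel \<partial>lborel)
      = (\<integral>\<^sup>+x. \<integral>\<^sup>+y. (\<lambda>z. ennreal l * (h1 z + ennreal K * h2 z)) (x,y) \<partial>lborel \<partial>lborel)"
    by (simp only: split)
  also have "\<dots> = (\<integral>\<^sup>+z. ennreal l * (h1 z + ennreal K * h2 z) \<partial>(lborel \<Otimes>\<^sub>M lborel))"
    by (rule lborel.nn_integral_fst) measurable
  also have "\<dots> = ennreal l * ((\<integral>\<^sup>+z. h1 z \<partial>(lborel \<Otimes>\<^sub>M lborel)) + ennreal K * (\<integral>\<^sup>+z. h2 z \<partial>(lborel \<Otimes>\<^sub>M lborel)))"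
    by (simp add: nn_integral_cmult nn_integral_add)
  also have "\<dots> \<le> ennreal l * (ennreal (measure lebesgue D1 * measure lebesgue D2) + ennreal K * 1)"
    by (intro mult_left_mono add_mono I1 I2) auto
  also have "\<dots> = ennreal (l * (measure lebesgue D1 * measure lebesgue D2 + \<beta> * c1 / c0))"
    using lam K by (simp add: K_def ennreal_mult[symmetric] ennreal_plus[symmetric] del: ennreal_plus)
  finally show ?thesis .
qed

lemma set_integrable_const_leb:
  fixes c :: complex
  assumes "A \<in> lmeasurable"
  shows "set_integrable lebesgue A (\<lambda>_. c)"
  using assms unfolding set_integrable_def
  by (intro integrable_scaleR_left integrable_real_indicator) (auto simp: fmeasurable_def)

lemma avg_diff_rep:
  fixes w :: "'a::euclidean_space \<Rightarrow> complex"
  assumes A: "A \<in> lmeasurable" "measure lebesgue A > 0" and wA: "set_integrable lebesgue A w"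
  shows "z - avg A w = of_real (1 / measure lebesgue A) * (LINT y:A|lebesgue. z - w y)"
proof -
  have "(LINT y:A|lebesgue. z - w y) = (LINT y:A|lebesgue. z) - (LINT y:A|lebesgue. w y)"
    using set_integrable_const_leb[OF A(1)] wA by (rule set_integral_diff)
  also have "(LINT y:A|lebesgue. z) = of_real (measure lebesgue A) * z"
    using A by (subst set_integral_const) (auto simp: fmeasurable_def scaleR_conv_of_real)
  finally show ?thesis using A(2) unfolding avg_def by (simp add: field_simps)
qed

lemma lemmaA:
  fixes \<phi> :: "real \<Rightarrow> 'a::euclidean_space \<Rightarrow> 'a \<Rightarrow> real" and a :: "'a \<Rightarrow> real"
    and w g :: "'a \<Rightarrow> complex" and D D1 D2 \<Omega> :: "'a set"
  assumes a_nonneg: "\<And>z. a z \<ge> 0" and c0: "c0 > 0"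
    and a_lower: "AE z in lebesgue. z \<in> ball 0 r0 \<longrightarrow> a z \<ge> c0"
    and \<phi>_nonneg: "\<And>t x y. t \<ge> 0 \<Longrightarrow> x \<in> \<Omega> \<Longrightarrow> y \<in> \<Omega> \<Longrightarrow> \<phi> t x y \<ge> 0"
    and pm: "pm > 1" and \<beta>: "\<beta> \<ge> 1" and c1: "c1 > 0"
    and AEphi: "AE z in lebesgue. z \<in> \<Omega> \<times> \<Omega> \<longrightarrow>
         almost_incr_on {0<..} \<beta> (\<lambda>t. \<phi> t (fst z) (snd z) / t powr pm) \<and> inverse c1 \<le> \<phi> 1 (fst z) (snd z)"
    and D: "open D" "D \<subseteq> \<Omega>" and D1: "open D1" "D1 \<subseteq> D" "bounded D1"
    and D2: "open D2" "D2 \<subseteq> D" "bounded D2"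
    and close: "\<And>x y. x \<in> D1 \<Longrightarrow> y \<in> D2 \<Longrightarrow> dist x y < r0"
    and lam: "l > 0" and F: "Ffun \<phi> a D (\<lambda>x. w x / of_real l) \<le> 1"
    and g: "g \<in> borel_measurable borel" and wg: "AE x in lebesgue. x \<in> D1 \<union> D2 \<longrightarrow> w x = g x"
    and wD1: "set_integrable lebesgue D1 w" and wD2: "set_integrable lebesgue D2 w"
    and D2pos: "measure lebesgue D2 > 0"
  shows "(LINT x:D1|lebesgue. cmod (w x - avg D2 w)) \<le> l * (measure lebesgue D1 + \<beta> * c1 / c0 / measure lebesgue D2)"
proof -
  define m where "m = avg D2 w"
  define M1 where "M1 = measure lebesgue D1"
  define M2 where "M2 = measure lebesgue D2"
  define c where "c = 1 / M2"
  have M2pos: "M2 > 0" using D2pos by (simp add: M2_def)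
  have EB: "(\<integral>\<^sup>+x. \<integral>\<^sup>+y. indicator D1 x * indicator D2 y * ennreal (cmod (g x - g y)) \<partial>lborel \<partial>lborel)
     \<le> ennreal (l * (M1 * M2 + \<beta> * c1 / c0))"
    unfolding M1_def M2_def
    by (rule energy_bound[OF a_nonneg c0 a_lower \<phi>_nonneg pm \<beta> c1 AEphi D D1 D2 close lam F g wg])
  have D1l: "D1 \<in> lmeasurable" and D2l: "D2 \<in> lmeasurable"
    using D1 D2 by (auto intro!: bounded_set_imp_lmeasurable)
  have gm[measurable]: "g \<in> borel_measurable lborel" using g by simp
  have D1b[measurable]: "D1 \<in> sets lborel" and D2b[measurable]: "D2 \<in> sets lborel"
    using D1 D2 by auto
  define G where "G x = (\<integral>\<^sup>+y. indicator D2 y * ennreal (cmod (g x - g y)) \<partial>lborel)" for x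
  have Gm[measurable]: "G \<in> borel_measurable lborel"
    unfolding G_def by measurable
  have pw: "AE x in lebesgue. ennreal (indicator D1 x * cmod (w x - m)) \<le> ennreal c * (indicator D1 x * G x)"
    using wg
  proof eventually_elim
    case (elim x)
    show ?case
    proof (cases "x \<in> D1")
      case False then show ?thesis by simp
    next
      case True
      then have wx: "w x = g x" using elim D1 by auto
      have int: "set_integrable lebesgue D2 (\<lambda>y. w x - w y)"
        using set_integrable_const_leb[OF D2l] wD2 by (rule set_integral_diff)
      have "w x - m = of_real c * (LINT y:D2|lebesgue. w x - w y)"
        unfolding m_def c_def M2_def by (rule avg_diff_rep[OF D2l D2pos wD2])
      then have "cmod (w x - m) = c * cmod (LINT y:D2|lebesgue. w x - w y)"
        using M2pos by (simp add: c_def norm_mult norm_divide)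
      moreover have "ennreal (cmod (LINT y:D2|lebesgue. w x - w y)) \<le> (\<integral>\<^sup>+y. norm (indicator D2 y *\<^sub>R (w x - w y)) \<partial>lebesgue)"
        using int unfolding set_integrable_def set_lebesgue_integral_def by (rule integral_norm_bound_ennreal)
      moreover have "(\<integral>\<^sup>+y. norm (indicator D2 y *\<^sub>R (w x - w y)) \<partial>lebesgue) = (\<integral>\<^sup>+y. indicator D2 y * ennreal (cmod (g x - g y)) \<partial>lebesgue)"
      proof (rule nn_integral_cong_AE)
        show "AE y in lebesgue. ennreal (norm (indicator D2 y *\<^sub>R (w x - w y))) = indicator D2 y * ennreal (cmod (g x - g y))"
          using wg by eventually_elim (use D2 wx in \<open>auto simp: indicator_def\<close>)
      qed
      moreover have "(\<integral>\<^sup>+y. indicator D2 y * ennreal (cmod (g x - g y)) \<partial>lebesgue) = G x"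
        unfolding G_def by (rule nn_integral_completion)
      ultimately have X: "cmod (w x - m) = c * cmod (LINT y:D2|lebesgue. w x - w y)"
          and Y: "ennreal (cmod (LINT y:D2|lebesgue. w x - w y)) \<le> G x" by auto
      have "ennreal (cmod (w x - m)) = ennreal c * ennreal (cmod (LINT y:D2|lebesgue. w x - w y))"
        unfolding X by (rule ennreal_mult) (use M2pos in \<open>auto simp: c_def\<close>)
      also have "\<dots> \<le> ennreal c * G x" using Y by (rule mult_left_mono) simp
      finally have "ennreal (cmod (w x - m)) \<le> ennreal c * G x" .
      then show ?thesis using True by simp
    qed
  qed
  have int1: "set_integrable lebesgue D1 (\<lambda>x. cmod (w x - m))"
    by (rule set_integrable_norm[OF set_integral_diff(1)[OF wD1 set_integrable_const_leb[OF D1l]]])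
  have L: "ennreal (LINT x:D1|lebesgue. cmod (w x - m)) = (\<integral>\<^sup>+x. ennreal (indicator D1 x * cmod (w x - m)) \<partial>lebesgue)"
    unfolding set_lebesgue_integral_def real_scaleR_def
    by (rule nn_integral_eq_integral[symmetric]) (use int1 in \<open>auto simp: set_integrable_def\<close>)
  have inner: "indicator D1 x * G x = (\<integral>\<^sup>+y. indicator D1 x * indicator D2 y * ennreal (cmod (g x - g y)) \<partial>lborel)" for x
    unfolding G_def by (subst nn_integral_cmult[symmetric]) (auto simp: mult.assoc)
  have "ennreal (LINT x:D1|lebesgue. cmod (w x - m)) \<le> (\<integral>\<^sup>+x. ennreal c * (indicator D1 x * G x) \<partial>lebesgue)"
    unfolding L by (rule nn_integral_mono_AE[OF pw])
  also have "\<dots> = (\<integral>\<^sup>+x. ennreal c * (indicator D1 x * G x) \<partial>lborel)"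
    by (rule nn_integral_completion)
  also have "\<dots> = ennreal c * (\<integral>\<^sup>+x. indicator D1 x * G x \<partial>lborel)"
    by (rule nn_integral_cmult) measurable
  also have "\<dots> = ennreal c * (\<integral>\<^sup>+x. \<integral>\<^sup>+y. indicator D1 x * indicator D2 y * ennreal (cmod (g x - g y)) \<partial>lborel \<partial>lborel)"
    by (simp only: inner)
  also have "\<dots> \<le> ennreal c * ennreal (l * (M1 * M2 + \<beta> * c1 / c0))"
    by (rule mult_left_mono[OF EB]) simp
  also have "\<dots> = ennreal (l * (M1 + \<beta> * c1 / c0 / M2))"
  proof -
    have "c * (l * (M1 * M2 + \<beta> * c1 / c0)) = l * (M1 + \<beta> * c1 / c0 / M2)"
      using M2pos by (simp add: c_def field_simps)
    moreover have "l * (M1 * M2 + \<beta> * c1 / c0) \<ge> 0"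
      using lam M2pos c0 c1 \<beta> by (simp add: M1_def)
    ultimately show ?thesis using M2pos by (simp add: c_def ennreal_mult[symmetric])
  qed
  finally have "ennreal (LINT x:D1|lebesgue. cmod (w x - m)) \<le> ennreal (l * (M1 + \<beta> * c1 / c0 / M2))" .
  moreover have "l * (M1 + \<beta> * c1 / c0 / M2) \<ge> 0"
    using lam M2pos c0 c1 \<beta> by (simp add: M1_def)
  ultimately show ?thesis unfolding m_def M1_def M2_def by (simp add: ennreal_le_iff)
qed

lemma ex_borel_version:
  fixes w :: "'a::euclidean_space \<Rightarrow> complex"
  assumes f: "(\<lambda>x. indicator A x *\<^sub>R w x) \<in> borel_measurable lebesgue"
  shows "\<exists>g. g \<in> borel_measurable borel \<and> (AE x in lebesgue. x \<in> A \<longrightarrow> w x = g x)"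
proof -
  define f where "f x = indicator A x *\<^sub>R w x" for x
  have "(\<lambda>x. Re (f x)) \<in> borel_measurable (completion lborel)"
    using f unfolding f_def by measurable
  from completion_ex_borel_measurable_real[OF this]
  obtain gr where gr: "gr \<in> borel_measurable lborel" "AE x in lborel. Re (f x) = gr x" by blast
  have "(\<lambda>x. Im (f x)) \<in> borel_measurable (completion lborel)"
    using f unfolding f_def by measurable
  from completion_ex_borel_measurable_real[OF this]
  obtain gi where gi: "gi \<in> borel_measurable lborel" "AE x in lborel. Im (f x) = gi x" by blast
  define g where "g x = Complex (gr x) (gi x)" for x
  have "g \<in> borel_measurable borel"
  proof -
    have "(\<lambda>x. complex_of_real (gr x) + \<i> * complex_of_real (gi x)) \<in> borel_measurable borel"
      using gr(1) gi(1) by measurable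
    moreover have "(\<lambda>x. complex_of_real (gr x) + \<i> * complex_of_real (gi x)) = g"
      by (auto simp: g_def complex_eq_iff)
    ultimately show ?thesis by simp
  qed
  moreover have "AE x in lborel. x \<in> A \<longrightarrow> w x = g x"
    using gr(2) gi(2) by eventually_elim (auto simp: f_def g_def complex_eq_iff)
  then have "AE x in lebesgue. x \<in> A \<longrightarrow> w x = g x"
    by (simp add: AE_completion_iff)
  ultimately show ?thesis by blast
qed

lemma open_pos_measure:
  fixes D :: "'a::euclidean_space set"
  assumes "open D" "bounded D" "D \<noteq> {}"
  shows "measure lebesgue D > 0"
proof -
  obtain x where x: "x \<in> D" using assms by auto
  then obtain r where r: "r > 0" "ball x r \<subseteq> D" using assms(1) open_contains_ball by blast
  have "measure lebesgue (ball x r) \<le> measure lebesgue D"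
    using r assms by (intro measure_mono_fmeasurable) (auto intro: bounded_set_imp_lmeasurable)
  moreover have "measure lebesgue (ball x r) > 0" using content_ball_pos[OF r(1)] by simp
  ultimately show ?thesis by linarith
qed

lemma avg_minus_const:
  fixes w :: "'a::euclidean_space \<Rightarrow> complex"
  assumes A: "A \<in> lmeasurable" "measure lebesgue A > 0" and wA: "set_integrable lebesgue A w"
  shows "avg A (\<lambda>x. w x - z) = avg A w - z"
proof -
  have "(LINT y:A|lebesgue. w y - z) = (LINT y:A|lebesgue. w y) - (LINT y:A|lebesgue. z)"
    using wA set_integrable_const_leb[OF A(1)] by (rule set_integral_diff)
  also have "(LINT y:A|lebesgue. z) = of_real (measure lebesgue A) * z"
    using A by (subst set_integral_const) (auto simp: fmeasurable_def scaleR_conv_of_real)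
  finally show ?thesis using A(2) unfolding avg_def by (simp add: field_simps)
qed

lemma avg_close:
  fixes w :: "'a::euclidean_space \<Rightarrow> complex"
  assumes A: "A \<in> lmeasurable" "measure lebesgue A > 0" and wA: "set_integrable lebesgue A w"
  shows "cmod (avg A w - z) \<le> (LINT x:A|lebesgue. cmod (w x - z)) / measure lebesgue A"
proof -
  have int: "set_integrable lebesgue A (\<lambda>x. w x - z)"
    using wA set_integrable_const_leb[OF A(1)] by (rule set_integral_diff)
  have "avg A w - z = avg A (\<lambda>x. w x - z)" using avg_minus_const[OF A wA] by simp
  also have "cmod \<dots> = cmod (LINT x:A|lebesgue. w x - z) / measure lebesgue A"
    unfolding avg_def using A(2) by (simp add: norm_mult norm_divide)
  also have "\<dots> \<le> (LINT x:A|lebesgue. cmod (w x - z)) / measure lebesgue A"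
    using A(2) set_integral_norm_bound[OF int] by (simp add: divide_right_mono)
  finally show ?thesis .
qed

lemma lemmaB:
  fixes \<phi> :: "real \<Rightarrow> 'a::euclidean_space \<Rightarrow> 'a \<Rightarrow> real" and a :: "'a \<Rightarrow> real"
    and w g :: "'a \<Rightarrow> complex" and D E \<Omega> :: "'a set"
  assumes a_nonneg: "\<And>z. a z \<ge> 0" and c0: "c0 > 0"
    and a_lower: "AE z in lebesgue. z \<in> ball 0 r0 \<longrightarrow> a z \<ge> c0"
    and \<phi>_nonneg: "\<And>t x y. t \<ge> 0 \<Longrightarrow> x \<in> \<Omega> \<Longrightarrow> y \<in> \<Omega> \<Longrightarrow> \<phi> t x y \<ge> 0"
    and pm: "pm > 1" and \<beta>: "\<beta> \<ge> 1" and c1: "c1 > 0"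
    and AEphi: "AE z in lebesgue. z \<in> \<Omega> \<times> \<Omega> \<longrightarrow>
         almost_incr_on {0<..} \<beta> (\<lambda>t. \<phi> t (fst z) (snd z) / t powr pm) \<and> inverse c1 \<le> \<phi> 1 (fst z) (snd z)"
    and D: "open D" "D \<subseteq> \<Omega>" and E: "open E" "E \<subseteq> D" "bounded E" "E \<noteq> {}"
    and close: "\<And>x y. x \<in> E \<Longrightarrow> y \<in> E \<Longrightarrow> dist x y < r0"
    and lam: "l > 0" and F: "Ffun \<phi> a D (\<lambda>x. w x / of_real l) \<le> 1"
    and g: "g \<in> borel_measurable borel" and wg: "AE x in lebesgue. x \<in> E \<longrightarrow> w x = g x"
    and wm: "(\<lambda>x. indicator E x *\<^sub>R w x) \<in> borel_measurable lebesgue"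
  shows "set_integrable lebesgue E w"
proof -
  have wg': "AE x in lebesgue. x \<in> E \<union> E \<longrightarrow> w x = g x" using wg by simp
  have EB: "(\<integral>\<^sup>+x. \<integral>\<^sup>+y. indicator E x * indicator E y * ennreal (cmod (g x - g y)) \<partial>lborel \<partial>lborel)
     \<le> ennreal (l * (measure lebesgue E * measure lebesgue E + \<beta> * c1 / c0))"
    by (rule energy_bound[OF a_nonneg c0 a_lower \<phi>_nonneg pm \<beta> c1 AEphi D E(1-3) E(1-3) close lam F g wg'])
  have gm[measurable]: "g \<in> borel_measurable lborel" using g by simp
  have Eb[measurable]: "E \<in> sets lborel" using E by auto
  define H where "H x = (\<integral>\<^sup>+y. indicator E x * indicator E y * ennreal (cmod (g x - g y)) \<partial>lborel)" for x
  have Hm: "H \<in> borel_measurable lborel" unfolding H_def by measurable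
  have "integral\<^sup>N lborel H \<noteq> \<infinity>"
    using EB unfolding H_def by (auto simp: top_unique)
  from nn_integral_PInf_AE[OF Hm this] have aeH: "AE x in lborel. H x \<noteq> \<infinity>" .
  obtain x0 where x0: "x0 \<in> E" "H x0 \<noteq> \<infinity>"
  proof (rule ccontr)
    assume "\<not> thesis"
    then have *: "\<forall>x\<in>E. H x = \<infinity>" using that by blast
    have "AE x in lborel. x \<notin> E" using aeH by (rule eventually_mono) (use * in auto)
    then have "E \<in> null_sets lborel" using Eb by (simp add: AE_iff_null_sets)
    then have "measure lborel E = 0" by (simp add: measure_eq_0_null_sets)
    moreover have "measure lebesgue E > 0" using open_pos_measure[OF E(1) E(3) E(4)] .
    ultimately show False using Eb by simp
  qed
  have fin: "emeasure lborel E < \<infinity>" using E(3) by (rule emeasure_bounded_finite)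
  have "(\<integral>\<^sup>+y. ennreal (norm (indicator E y *\<^sub>R g y)) \<partial>lborel)
      \<le> (\<integral>\<^sup>+y. indicator E y * ennreal (cmod (g x0 - g y)) + ennreal (cmod (g x0)) * indicator E y \<partial>lborel)"
  proof (rule nn_integral_mono)
    fix y
    have "cmod (g y) \<le> cmod (g x0 - g y) + cmod (g x0)"
      using norm_triangle_ineq4[of "g x0" "g x0 - g y"] by (simp add: add.commute)
    then show "ennreal (norm (indicator E y *\<^sub>R g y)) \<le> indicator E y * ennreal (cmod (g x0 - g y)) + ennreal (cmod (g x0)) * indicator E y"
      by (auto simp: indicator_def ennreal_plus[symmetric] simp del: ennreal_plus intro!: ennreal_leI)
  qed
  also have "\<dots> = (\<integral>\<^sup>+y. indicator E y * ennreal (cmod (g x0 - g y)) \<partial>lborel) + ennreal (cmod (g x0)) * emeasure lborel E"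
    by (subst nn_integral_add) (simp_all only: nn_integral_cmult_indicator[OF Eb], measurable)
  also have "(\<integral>\<^sup>+y. indicator E y * ennreal (cmod (g x0 - g y)) \<partial>lborel) = H x0"
    unfolding H_def using x0(1) by simp
  also have "H x0 + ennreal (cmod (g x0)) * emeasure lborel E < \<infinity>"
    using x0(2) fin by (simp add: less_top ennreal_mult_less_top)
  finally have "integrable lborel (\<lambda>y. indicator E y *\<^sub>R g y)"
    by (intro integrableI_bounded) auto
  then have "integrable lebesgue (\<lambda>y. indicator E y *\<^sub>R g y)"
    by (subst integrable_completion) auto
  moreover have "AE y in lebesgue. indicator E y *\<^sub>R g y = indicator E y *\<^sub>R w y"
    using wg by eventually_elim (auto simp: indicator_def)
  ultimately show ?thesis unfolding set_integrable_def
    by (rule integrable_cong_AE_imp[OF _ wm])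
qed

lemma set_integral_le_sum:
  fixes f :: "'a::euclidean_space \<Rightarrow> real" and P :: "'i \<Rightarrow> 'a set"
  assumes I: "finite I" and A: "A \<in> sets lebesgue" and P: "\<And>i. i \<in> I \<Longrightarrow> P i \<in> sets lebesgue"
    and PA: "\<And>i. i \<in> I \<Longrightarrow> P i \<subseteq> A" and cover: "A \<subseteq> (\<Union>i\<in>I. P i)"
    and nn: "\<And>x. x \<in> A \<Longrightarrow> f x \<ge> 0" and int: "set_integrable lebesgue A f"
  shows "(LINT x:A|lebesgue. f x) \<le> (\<Sum>i\<in>I. LINT x:P i|lebesgue. f x)"
proof -
  have intP: "integrable lebesgue (\<lambda>x. indicator (P i) x * f x)" if "i \<in> I" for i
    using set_integrable_subset[OF int P[OF that] PA[OF that]] by (simp add: set_integrable_def)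
  have "(\<Sum>i\<in>I. LINT x:P i|lebesgue. f x) = (\<Sum>i\<in>I. LINT x|lebesgue. indicator (P i) x * f x)"
    by (simp add: set_lebesgue_integral_def)
  also have "\<dots> = (LINT x|lebesgue. (\<Sum>i\<in>I. indicator (P i) x * f x))"
    using integral_sum[where I=I and f="\<lambda>i x. indicator (P i) x * f x"] intP by simp
  finally have R: "(\<Sum>i\<in>I. LINT x:P i|lebesgue. f x) = (LINT x|lebesgue. (\<Sum>i\<in>I. indicator (P i) x * f x))" .
  have "(LINT x:A|lebesgue. f x) = (LINT x|lebesgue. indicator A x * f x)"
    by (simp add: set_lebesgue_integral_def)
  also have "\<dots> \<le> (LINT x|lebesgue. (\<Sum>i\<in>I. indicator (P i) x * f x))"
  proof (rule integral_mono)
    show "integrable lebesgue (\<lambda>x. indicator A x * f x)" using int by (simp add: set_integrable_def)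
    show "integrable lebesgue (\<lambda>x. \<Sum>i\<in>I. indicator (P i) x * f x)"
      using integrable_sum[where I=I and f="\<lambda>i x. indicator (P i) x * f x"] intP by simp
    fix x
    show "indicator A x * f x \<le> (\<Sum>i\<in>I. indicator (P i) x * f x)"
    proof (cases "x \<in> A")
      case True
      then obtain j where j: "j \<in> I" "x \<in> P j" using cover by auto
      have "indicator A x * f x = indicator (P j) x * f x" using True j by simp
      also have "\<dots> \<le> (\<Sum>i\<in>I. indicator (P i) x * f x)"
        by (rule member_le_sum[OF j(1)]) (use nn PA I in \<open>auto simp: indicator_def\<close>)
      finally show ?thesis .
    next
      case False
      then have "x \<notin> P i" if "i \<in> I" for i using PA that by auto
      then show ?thesis using False by simp
    qed
  qed
  finally show ?thesis using R by simp
qed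

lemma piece_bound:
  fixes v :: "'a::euclidean_space \<Rightarrow> complex"
  assumes P: "P \<in> lmeasurable" and vP: "set_integrable lebesgue P v"
  shows "(LINT x:P|lebesgue. cmod (v x - m)) \<le> (LINT x:P|lebesgue. cmod (v x - mc)) + measure lebesgue P * cmod (mc - m)"
proof -
  have i1: "set_integrable lebesgue P (\<lambda>x. cmod (v x - m))"
    by (rule set_integrable_norm[OF set_integral_diff(1)[OF vP set_integrable_const_leb[OF P]]])
  have i2: "set_integrable lebesgue P (\<lambda>x. cmod (v x - mc))"
    by (rule set_integrable_norm[OF set_integral_diff(1)[OF vP set_integrable_const_leb[OF P]]])
  have i3: "set_integrable lebesgue P (\<lambda>x. cmod (mc - m))"
    using P unfolding set_integrable_def
    by (intro integrable_scaleR_left integrable_real_indicator) (auto simp: fmeasurable_def)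
  have "(LINT x:P|lebesgue. cmod (v x - m)) \<le> (LINT x:P|lebesgue. cmod (v x - mc) + cmod (mc - m))"
    using i1 set_integral_add(1)[OF i2 i3]
    by (rule set_integral_mono) (metis diff_add_cancel norm_triangle_ineq diff_diff_eq2 add_diff_cancel_left' add.commute)
  also have "\<dots> = (LINT x:P|lebesgue. cmod (v x - mc)) + (LINT x:P|lebesgue. cmod (mc - m))"
    by (rule set_integral_add(2)[OF i2 i3])
  also have "(LINT x:P|lebesgue. cmod (mc - m)) = measure lebesgue P * cmod (mc - m)"
    using P by (subst set_integral_const) (auto simp: fmeasurable_def)
  finally show ?thesis .
qed

lemma main_ineq:
  fixes \<phi> :: "real \<Rightarrow> 'a::euclidean_space \<Rightarrow> 'a \<Rightarrow> real" and a :: "'a \<Rightarrow> real"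
    and \<omega> \<Omega> :: "'a set" and xB :: 'a
  assumes a_nonneg: "\<And>z. a z \<ge> 0" and c0: "c0 > 0"
    and a_lower: "AE z in lebesgue. z \<in> ball 0 r0 \<longrightarrow> a z \<ge> c0"
    and \<phi>_nonneg: "\<And>t x y. t \<ge> 0 \<Longrightarrow> x \<in> \<Omega> \<Longrightarrow> y \<in> \<Omega> \<Longrightarrow> \<phi> t x y \<ge> 0"
    and pm: "pm > 1" and \<beta>: "\<beta> \<ge> 1" and c1: "c1 > 0"
    and AEphi: "AE z in lebesgue. z \<in> \<Omega> \<times> \<Omega> \<longrightarrow>
         almost_incr_on {0<..} \<beta> (\<lambda>t. \<phi> t (fst z) (snd z) / t powr pm) \<and> inverse c1 \<le> \<phi> 1 (fst z) (snd z)"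
    and r0: "r0 > 0"
    and \<omega>: "open \<omega>" "connected \<omega>" "bounded \<omega>" "\<omega> \<subseteq> \<Omega>"
    and B: "rB > 0" "2 * rB \<le> r0" "ball xB rB \<subseteq> \<omega>"
  shows "\<exists>C>0. \<forall>v l. l > 0 \<and> set_integrable lebesgue \<omega> v \<and> Ffun \<phi> a \<omega> (\<lambda>x. v x / of_real l) \<le> 1
            \<longrightarrow> cmod (avg \<omega> v - avg (ball xB rB) v) \<le> C * l"
proof -
  define K where "K = \<beta> * c1 / c0"
  have K: "K > 0" using \<beta> c1 c0 by (simp add: K_def)
  define adm where "adm v l \<longleftrightarrow> l > 0 \<and> set_integrable lebesgue \<omega> v \<and> Ffun \<phi> a \<omega> (\<lambda>x. v x / of_real l) \<le> 1"
    for v :: "'a \<Rightarrow> complex" and l :: real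
  have LA0: "(LINT x:D1|lebesgue. cmod (v x - avg D2 v)) \<le> l * (measure lebesgue D1 + K / measure lebesgue D2)"
    if D1: "open D1" "D1 \<subseteq> \<omega>" "bounded D1" and D2: "open D2" "D2 \<subseteq> \<omega>" "bounded D2" "D2 \<noteq> {}"
      and close: "\<And>x y. x \<in> D1 \<Longrightarrow> y \<in> D2 \<Longrightarrow> dist x y < r0" and ad: "adm v l"
    for D1 D2 v l
  proof -
    have lam: "l > 0" and int: "set_integrable lebesgue \<omega> v" and F: "Ffun \<phi> a \<omega> (\<lambda>x. v x / of_real l) \<le> 1"
      using ad by (auto simp: adm_def)
    have "(\<lambda>x. indicator \<omega> x *\<^sub>R v x) \<in> borel_measurable lebesgue"
      using int unfolding set_integrable_def by (rule borel_measurable_integrable)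
    from ex_borel_version[OF this] obtain g where g: "g \<in> borel_measurable borel"
      and wg0: "AE x in lebesgue. x \<in> \<omega> \<longrightarrow> v x = g x" by blast
    have wg: "AE x in lebesgue. x \<in> D1 \<union> D2 \<longrightarrow> v x = g x"
      using wg0 by (rule eventually_mono) (use D1 D2 in auto)
    have D1l: "D1 \<in> lmeasurable" and D2l: "D2 \<in> lmeasurable"
      using D1 D2 by (auto intro: lmeasurable_open)
    have wD1: "set_integrable lebesgue D1 v"
      by (rule set_integrable_subset[OF int]) (use D1l D1 in auto)
    have wD2: "set_integrable lebesgue D2 v"
      by (rule set_integrable_subset[OF int]) (use D2l D2 in auto)
    have D2pos: "measure lebesgue D2 > 0" using open_pos_measure[OF D2(1) D2(3) D2(4)] .
    show ?thesis
      using lemmaA[OF a_nonneg c0 a_lower \<phi>_nonneg pm \<beta> c1 AEphi \<omega>(1) \<omega>(4) D1 D2(1-3) close lam F g wg wD1 wD2 D2pos]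
      by (simp add: K_def)
  qed
  have LA: "cmod (avg D1 v - avg D2 v) \<le> l * (1 + K / (measure lebesgue D1 * measure lebesgue D2))"
    if D1: "open D1" "D1 \<subseteq> \<omega>" "bounded D1" "D1 \<noteq> {}" and D2: "open D2" "D2 \<subseteq> \<omega>" "bounded D2" "D2 \<noteq> {}"
      and close: "\<And>x y. x \<in> D1 \<Longrightarrow> y \<in> D2 \<Longrightarrow> dist x y < r0" and ad: "adm v l"
    for D1 D2 v l
  proof -
    have int: "set_integrable lebesgue \<omega> v" using ad by (auto simp: adm_def)
    have D1l: "D1 \<in> lmeasurable" using D1 by (auto intro: lmeasurable_open)
    have wD1: "set_integrable lebesgue D1 v"
      by (rule set_integrable_subset[OF int]) (use D1l D1 in auto)
    have M1: "measure lebesgue D1 > 0" using open_pos_measure[OF D1(1) D1(3) D1(4)] .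
    have M2: "measure lebesgue D2 > 0" using open_pos_measure[OF D2(1) D2(3) D2(4)] .
    have "cmod (avg D1 v - avg D2 v) \<le> (LINT x:D1|lebesgue. cmod (v x - avg D2 v)) / measure lebesgue D1"
      by (rule avg_close[OF D1l M1 wD1])
    also have "\<dots> \<le> l * (measure lebesgue D1 + K / measure lebesgue D2) / measure lebesgue D1"
      using LA0[OF D1(1-3) D2 close ad] M1 by (simp add: divide_right_mono)
    also have "\<dots> = l * (1 + K / (measure lebesgue D1 * measure lebesgue D2))"
      using M1 M2 by (simp add: field_simps)
    finally show ?thesis .
  qed
  define \<rho> where "\<rho> = r0 / 8"
  have \<rho>: "\<rho> > 0" using r0 by (simp add: \<rho>_def)
  have cc: "compact (closure \<omega>)" using \<omega>(3) by (simp add: compact_closure)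
  have cv: "closure \<omega> \<subseteq> (\<Union>c\<in>closure \<omega>. ball c \<rho>)" using \<rho> by auto
  obtain F where F: "F \<subseteq> closure \<omega>" "finite F" "closure \<omega> \<subseteq> (\<Union>c\<in>F. ball c \<rho>)"
    using compactE_image[OF cc _ cv] by blast
  define P where "P c = \<omega> \<inter> ball c \<rho>" for c
  define F' where "F' = {c\<in>F. P c \<noteq> {}}"
  have F'fin: "finite F'" using F(2) by (simp add: F'_def)
  have Popen: "open (P c)" and Psub: "P c \<subseteq> \<omega>" and Pbdd: "bounded (P c)" for c
    using \<omega> by (auto simp: P_def)
  have cover: "\<omega> \<subseteq> (\<Union>c\<in>F'. P c)"
  proof
    fix x assume x: "x \<in> \<omega>"
    then obtain c where "c \<in> F" "x \<in> ball c \<rho>" using F(3) closure_subset by blast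
    then have "c \<in> F'" "x \<in> P c" using x by (auto simp: F'_def P_def)
    then show "x \<in> (\<Union>c\<in>F'. P c)" by blast
  qed
  define B where "B = ball xB rB"
  have Bprops: "open B" "B \<subseteq> \<omega>" "bounded B" "B \<noteq> {}" using B by (auto simp: B_def)
  have xB: "xB \<in> \<omega>" using B by auto
  then obtain c0' where c0': "c0' \<in> F'" "xB \<in> P c0'" using cover by auto
  define Good where "Good c \<longleftrightarrow> (\<exists>M. \<forall>v l. adm v l \<longrightarrow> cmod (avg (P c) v - avg B v) \<le> M * l)" for c
  have baseG: "Good c0'"
  proof -
    have close: "dist x y < r0" if "x \<in> P c0'" "y \<in> B" for x y
    proof -
      have "dist x y \<le> dist x c0' + dist c0' xB + dist xB y"
        by (metis add.commute dist_triangle dist_triangle_le add_left_mono order_trans)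
      moreover have "dist x c0' < \<rho>" "dist c0' xB < \<rho>" "dist xB y < rB"
        using that c0' by (auto simp: P_def B_def dist_commute)
      ultimately show ?thesis using B(2) r0 unfolding \<rho>_def by linarith
    qed
    have ne: "P c0' \<noteq> {}" using c0' by auto
    have "\<forall>v l. adm v l \<longrightarrow> cmod (avg (P c0') v - avg B v) \<le> (1 + K / (measure lebesgue (P c0') * measure lebesgue B)) * l"
    proof (intro allI impI)
      fix v l assume "adm v l"
      from LA[OF Popen Psub Pbdd ne Bprops close this]
      show "cmod (avg (P c0') v - avg B v) \<le> (1 + K / (measure lebesgue (P c0') * measure lebesgue B)) * l"
        by (simp add: mult.commute)
    qed
    then show ?thesis unfolding Good_def by blast
  qed
  define Adj where "Adj = {(c, c'). c \<in> F' \<and> c' \<in> F' \<and> P c \<inter> P c' \<noteq> {}}"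
  have stepG: "Good c'" if "(c, c') \<in> Adj" "Good c" for c c'
  proof -
    from that(1) have cc: "c \<in> F'" "c' \<in> F'" "P c \<inter> P c' \<noteq> {}" by (auto simp: Adj_def)
    then obtain z where z: "z \<in> P c" "z \<in> P c'" by auto
    from that(2) obtain M where M: "\<forall>v l. adm v l \<longrightarrow> cmod (avg (P c) v - avg B v) \<le> M * l"
      unfolding Good_def by blast
    have close: "dist x y < r0" if "x \<in> P c'" "y \<in> P c" for x y
    proof -
      have "dist x y \<le> dist x c' + dist c' z + dist z c + dist c y"
        by (metis add.commute dist_triangle dist_triangle_le add_left_mono order_trans)
      moreover have "dist x c' < \<rho>" "dist c' z < \<rho>" "dist z c < \<rho>" "dist c y < \<rho>"
        using that z by (auto simp: P_def dist_commute)
      ultimately show ?thesis using r0 unfolding \<rho>_def by linarith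
    qed
    have ne1: "P c' \<noteq> {}" and ne2: "P c \<noteq> {}" using z by auto
    define M' where "M' = M + (1 + K / (measure lebesgue (P c') * measure lebesgue (P c)))"
    have "\<forall>v l. adm v l \<longrightarrow> cmod (avg (P c') v - avg B v) \<le> M' * l"
    proof (intro allI impI)
      fix v l assume ad: "adm v l"
      have "cmod (avg (P c') v - avg B v) \<le> cmod (avg (P c') v - avg (P c) v) + cmod (avg (P c) v - avg B v)"
        using norm_triangle_ineq[of "avg (P c') v - avg (P c) v" "avg (P c) v - avg B v"] by simp
      also have "\<dots> \<le> l * (1 + K / (measure lebesgue (P c') * measure lebesgue (P c))) + M * l"
        using LA[OF Popen Psub Pbdd ne1 Popen Psub Pbdd ne2 close ad] M ad by (intro add_mono) auto
      also have "\<dots> = M' * l" by (simp add: M'_def algebra_simps)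
      finally show "cmod (avg (P c') v - avg B v) \<le> M' * l" .
    qed
    then show ?thesis unfolding Good_def by blast
  qed
  have reach: "(c0', c) \<in> Adj\<^sup>*" if c: "c \<in> F'" for c
  proof (rule ccontr)
    assume nr: "(c0', c) \<notin> Adj\<^sup>*"
    define U where "U = (\<Union>d\<in>{d\<in>F'. (c0', d) \<in> Adj\<^sup>*}. P d)"
    define V where "V = (\<Union>d\<in>{d\<in>F'. (c0', d) \<notin> Adj\<^sup>*}. P d)"
    have "open U" "open V" unfolding U_def V_def using Popen by auto
    moreover have "U \<inter> V \<inter> \<omega> = {}"
    proof (rule ccontr)
      assume "U \<inter> V \<inter> \<omega> \<noteq> {}"
      then obtain x d d' where "d \<in> F'" "(c0', d) \<in> Adj\<^sup>*" "x \<in> P d" "d' \<in> F'" "(c0', d') \<notin> Adj\<^sup>*" "x \<in> P d'"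
        unfolding U_def V_def by blast
      moreover from this have "(d, d') \<in> Adj" by (auto simp: Adj_def)
      ultimately show False by (meson rtrancl.rtrancl_into_rtrancl)
    qed
    moreover have "\<omega> \<subseteq> U \<union> V" using cover unfolding U_def V_def by blast
    ultimately have "U \<inter> \<omega> = {} \<or> V \<inter> \<omega> = {}" using connectedD[OF \<omega>(2)] by blast
    moreover have "xB \<in> U \<inter> \<omega>" using c0' xB unfolding U_def by blast
    moreover have "P c \<subseteq> V \<inter> \<omega>" using c nr Psub unfolding V_def by blast
    moreover have "P c \<noteq> {}" using c by (simp add: F'_def)
    ultimately show False by blast
  qed
  have allgood: "Good c" if "c \<in> F'" for c
    using reach[OF that]
  proof (induction rule: rtrancl_induct)
    case base then show ?case by (rule baseG)
  next
    case (step y z) then show ?case using stepG by blast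
  qed
  have "\<forall>c\<in>F'. \<exists>M. \<forall>v l. adm v l \<longrightarrow> cmod (avg (P c) v - avg B v) \<le> M * l"
    using allgood unfolding Good_def by blast
  then obtain Mf where Mf: "\<And>c v l. c \<in> F' \<Longrightarrow> adm v l \<Longrightarrow> cmod (avg (P c) v - avg B v) \<le> Mf c * l"
    by metis
  define S where "S = (\<Sum>c\<in>F'. measure lebesgue (P c) + K / measure lebesgue (P c) + measure lebesgue (P c) * \<bar>Mf c\<bar>)"
  have S_nn: "S \<ge> 0" unfolding S_def using K by (intro sum_nonneg) auto
  have \<omega>l: "\<omega> \<in> lmeasurable" using \<omega> by (auto intro: lmeasurable_open)
  have \<omega>pos: "measure lebesgue \<omega> > 0" using open_pos_measure[OF \<omega>(1) \<omega>(3)] xB by auto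
  define C where "C = S / measure lebesgue \<omega> + 1"
  have "S / measure lebesgue \<omega> \<ge> 0" using S_nn \<omega>pos by simp
  then have Cpos: "C > 0" unfolding C_def by linarith
  have "\<forall>v l. l > 0 \<and> set_integrable lebesgue \<omega> v \<and> Ffun \<phi> a \<omega> (\<lambda>x. v x / of_real l) \<le> 1
            \<longrightarrow> cmod (avg \<omega> v - avg (ball xB rB) v) \<le> C * l"
  proof (intro allI impI)
    fix v l assume "l > 0 \<and> set_integrable lebesgue \<omega> v \<and> Ffun \<phi> a \<omega> (\<lambda>x. v x / of_real l) \<le> 1"
    then have ad: "adm v l" and lam: "l > 0" and int: "set_integrable lebesgue \<omega> v" by (auto simp: adm_def)
    define m where "m = avg B v"
    have int_m: "set_integrable lebesgue \<omega> (\<lambda>x. cmod (v x - m))"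
      by (rule set_integrable_norm[OF set_integral_diff(1)[OF int set_integrable_const_leb[OF \<omega>l]]])
    have Pl: "P c \<in> lmeasurable" for c using Popen Pbdd by (auto intro: lmeasurable_open)
    have piece: "(LINT x:P c|lebesgue. cmod (v x - m)) \<le> l * (measure lebesgue (P c) + K / measure lebesgue (P c) + measure lebesgue (P c) * \<bar>Mf c\<bar>)"
      if c: "c \<in> F'" for c
    proof -
      have ne: "P c \<noteq> {}" using c by (simp add: F'_def)
      have vP: "set_integrable lebesgue (P c) v"
        by (rule set_integrable_subset[OF int]) (use Pl Psub in auto)
      have close: "dist x y < r0" if "x \<in> P c" "y \<in> P c" for x y
      proof -
        have "dist x y \<le> dist x c + dist c y" by (rule dist_triangle)
        moreover have "dist x c < \<rho>" "dist c y < \<rho>" using that by (auto simp: P_def dist_commute)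
        ultimately show ?thesis using r0 unfolding \<rho>_def by linarith
      qed
      have "(LINT x:P c|lebesgue. cmod (v x - m)) \<le> (LINT x:P c|lebesgue. cmod (v x - avg (P c) v)) + measure lebesgue (P c) * cmod (avg (P c) v - m)"
        by (rule piece_bound[OF Pl vP])
      also have "\<dots> \<le> l * (measure lebesgue (P c) + K / measure lebesgue (P c)) + measure lebesgue (P c) * (\<bar>Mf c\<bar> * l)"
      proof (rule add_mono)
        show "(LINT x:P c|lebesgue. cmod (v x - avg (P c) v)) \<le> l * (measure lebesgue (P c) + K / measure lebesgue (P c))"
          by (rule LA0[OF Popen Psub Pbdd Popen Psub Pbdd ne close ad])
        have "cmod (avg (P c) v - m) \<le> Mf c * l" unfolding m_def by (rule Mf[OF c ad])
        also have "\<dots> \<le> \<bar>Mf c\<bar> * l" using lam by (intro mult_right_mono) auto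
        finally show "measure lebesgue (P c) * cmod (avg (P c) v - m) \<le> measure lebesgue (P c) * (\<bar>Mf c\<bar> * l)"
          by (intro mult_left_mono) auto
      qed
      also have "\<dots> = l * (measure lebesgue (P c) + K / measure lebesgue (P c) + measure lebesgue (P c) * \<bar>Mf c\<bar>)"
        by (simp add: algebra_simps)
      finally show ?thesis .
    qed
    have "cmod (avg \<omega> v - m) \<le> (LINT x:\<omega>|lebesgue. cmod (v x - m)) / measure lebesgue \<omega>"
      by (rule avg_close[OF \<omega>l \<omega>pos int])
    also have "(LINT x:\<omega>|lebesgue. cmod (v x - m)) \<le> (\<Sum>c\<in>F'. LINT x:P c|lebesgue. cmod (v x - m))"
      by (rule set_integral_le_sum[OF F'fin]) (use \<omega>l Pl Psub cover int_m in \<open>auto simp: fmeasurable_def\<close>)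
    also have "\<dots> \<le> (\<Sum>c\<in>F'. l * (measure lebesgue (P c) + K / measure lebesgue (P c) + measure lebesgue (P c) * \<bar>Mf c\<bar>))"
      by (rule sum_mono) (rule piece)
    also have "\<dots> = l * S" by (simp add: S_def sum_distrib_left)
    finally have "cmod (avg \<omega> v - m) \<le> l * S / measure lebesgue \<omega>"
      using \<omega>pos by (simp add: divide_right_mono)
    also have "\<dots> \<le> C * l" using lam \<omega>pos by (simp add: C_def field_simps)
    finally show "cmod (avg \<omega> v - avg (ball xB rB) v) \<le> C * l" by (simp add: m_def B_def)
  qed
  then show ?thesis using Cpos by blast
qed

theorem lemma6p2:
  fixes \<phi> :: "real \<Rightarrow> 'a::euclidean_space \<Rightarrow> 'a \<Rightarrow> real"
    and a :: "'a \<Rightarrow> real" and \<Omega> \<omega> :: "'a set"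
    and r0 c0 rB :: real and xB :: 'a
  assumes \<Omega>_open: "open \<Omega>"
    and a_int: "integrable lebesgue a" and a_nonneg: "\<And>z. a z \<ge> 0"
    and r0_pos: "r0 > 0" and c0_pos: "c0 > 0"
    and a_lower: "AE z in lebesgue. z \<in> ball 0 r0 \<longrightarrow> a z \<ge> c0"
    and components_chain: "\<not> connected \<Omega> \<Longrightarrow>
        \<exists>(I :: nat set) (\<Omega>s :: nat \<Rightarrow> 'a set). ((\<exists>n. I = {..<n}) \<or> I = UNIV)
          \<and> bij_betw \<Omega>s I (components \<Omega>)
          \<and> (\<forall>i. i \<in> I \<and> Suc i \<in> I \<longrightarrow> setdist (\<Omega>s i) (\<Omega>s (Suc i)) < diameter (ball (0::'a) r0))"
    and \<phi>_nonneg: "\<And>t x y. t \<ge> 0 \<Longrightarrow> x \<in> \<Omega> \<Longrightarrow> y \<in> \<Omega> \<Longrightarrow> \<phi> t x y \<ge> 0"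
    and C1: "\<And>u. L1loc \<Omega> u \<Longrightarrow>
        (\<lambda>z. \<phi> (cmod (u (fst z) - u (snd z))) (fst z) (snd z)) \<in> borel_measurable (lebesgue_on (\<Omega> \<times> \<Omega>))"
    and C2: "\<And>\<epsilon>. \<epsilon> > 0 \<Longrightarrow> \<exists>\<delta>. 0 < \<delta> \<and> \<delta> < 1 \<and>
        (AE z in lebesgue. z \<in> \<Omega> \<times> \<Omega> \<longrightarrow>
           (\<forall>s t. s > 0 \<and> t > 0 \<and> \<bar>s - t\<bar> \<ge> \<epsilon> * max s t \<longrightarrow>
              \<phi> ((s + t) / 2) (fst z) (snd z) \<le> (1 - \<delta>) * ((\<phi> s (fst z) (snd z) + \<phi> t (fst z) (snd z)) / 2)))"
    and C3: "\<exists>pm pp \<beta>. 1 < pm \<and> pm \<le> pp \<and> \<beta> \<ge> 1 \<and>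
        (AE z in lebesgue. z \<in> \<Omega> \<times> \<Omega> \<longrightarrow>
           almost_incr_on {0<..} \<beta> (\<lambda>t. \<phi> t (fst z) (snd z) / t powr pm)
         \<and> almost_decr_on {0<..} \<beta> (\<lambda>t. \<phi> t (fst z) (snd z) / t powr pp))"
    and C4: "\<exists>c1 > 0. (AE z in lebesgue. z \<in> \<Omega> \<times> \<Omega> \<longrightarrow>
           inverse c1 \<le> \<phi> 1 (fst z) (snd z) \<and> \<phi> 1 (fst z) (snd z) \<le> c1
         \<and> \<phi> 0 (fst z) (snd z) = 0 \<and> (\<forall>t > 0. \<phi> t (fst z) (snd z) > 0))"
    and rB_pos: "rB > 0"
    and B_in_comp: "\<exists>C \<in> components \<Omega>. ball xB rB \<subseteq> C"
    and B_diam: "diameter (ball xB rB) \<le> diameter (ball (0::'a) r0) / 2"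
    and \<omega>_domain: "open \<omega>" "connected \<omega>" "bounded \<omega>" "smooth_boundary \<omega>"
    and \<omega>_sub: "\<omega> \<subseteq> \<Omega>" and B_sub: "ball xB rB \<subseteq> \<omega>"
  shows "\<exists>C > 0. \<forall>u. in_Lambda \<phi> a \<Omega> u \<longrightarrow>
     (\<exists>v. coset_eq \<Omega> u v \<and> avg (ball xB rB) v = 0 \<and>
          (\<forall>w. coset_eq \<Omega> u w \<and> avg (ball xB rB) w = 0 \<longrightarrow> (AE x in lebesgue. x \<in> \<Omega> \<longrightarrow> w x = v x)))
   \<and> (\<forall>v. coset_eq \<Omega> u v \<and> avg (ball xB rB) v = 0 \<longrightarrow>
          ennreal (cmod (avg \<omega> v)) \<le> ennreal C * pnorm \<phi> a \<omega> v)"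
proof -
  obtain pm pp \<beta> where pm: "1 < pm" and \<beta>: "\<beta> \<ge> 1" and C3AE: "AE z in lebesgue. z \<in> \<Omega> \<times> \<Omega> \<longrightarrow>
           almost_incr_on {0<..} \<beta> (\<lambda>t. \<phi> t (fst z) (snd z) / t powr pm)
         \<and> almost_decr_on {0<..} \<beta> (\<lambda>t. \<phi> t (fst z) (snd z) / t powr pp)"
    using C3 by blast
  obtain c1 where c1: "c1 > 0" and C4AE: "AE z in lebesgue. z \<in> \<Omega> \<times> \<Omega> \<longrightarrow>
           inverse c1 \<le> \<phi> 1 (fst z) (snd z) \<and> \<phi> 1 (fst z) (snd z) \<le> c1
         \<and> \<phi> 0 (fst z) (snd z) = 0 \<and> (\<forall>t > 0. \<phi> t (fst z) (snd z) > 0)"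
    using C4 by blast
  have AEphi: "AE z in lebesgue. z \<in> \<Omega> \<times> \<Omega> \<longrightarrow>
         almost_incr_on {0<..} \<beta> (\<lambda>t. \<phi> t (fst z) (snd z) / t powr pm) \<and> inverse c1 \<le> \<phi> 1 (fst z) (snd z)"
    using C3AE C4AE by eventually_elim auto
  have rB2: "2 * rB \<le> r0" using B_diam rB_pos r0_pos by simp
  obtain C where Cpos: "C > 0" and Cb: "\<And>v l. l > 0 \<Longrightarrow> set_integrable lebesgue \<omega> v \<Longrightarrow> Ffun \<phi> a \<omega> (\<lambda>x. v x / of_real l) \<le> 1
            \<Longrightarrow> cmod (avg \<omega> v - avg (ball xB rB) v) \<le> C * l"
    using main_ineq[OF a_nonneg c0_pos a_lower \<phi>_nonneg pm \<beta> c1 AEphi r0_pos \<omega>_domain(1-3) \<omega>_sub rB_pos rB2 B_sub]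
    by blast
  show ?thesis
  proof (intro exI[of _ C] conjI allI impI Cpos)
    fix u assume uL: "in_Lambda \<phi> a \<Omega> u"
    show "\<exists>v. coset_eq \<Omega> u v \<and> avg (ball xB rB) v = 0 \<and>
          (\<forall>w. coset_eq \<Omega> u w \<and> avg (ball xB rB) w = 0 \<longrightarrow> (AE x in lebesgue. x \<in> \<Omega> \<longrightarrow> w x = v x))"
    proof -
      define B where "B = ball xB rB"
      have L1: "L1loc \<Omega> u" and pn: "pnorm \<phi> a \<Omega> u < \<infinity>" using uL by (auto simp: in_Lambda_def)
      have "{ennreal l |l. l > 0 \<and> Ffun \<phi> a \<Omega> (\<lambda>x. u x / of_real l) \<le> 1} \<noteq> {}"
      proof
        assume "{ennreal l |l. l > 0 \<and> Ffun \<phi> a \<Omega> (\<lambda>x. u x / of_real l) \<le> 1} = {}"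
        then have "pnorm \<phi> a \<Omega> u = top" unfolding pnorm_def by (simp only: Inf_empty)
        then show False using pn by simp
      qed
      then obtain l where l: "l > 0" "Ffun \<phi> a \<Omega> (\<lambda>x. u x / of_real l) \<le> 1" by blast
      have BO: "B \<subseteq> \<Omega>" using B_sub \<omega>_sub by (auto simp: B_def)
      have Bl: "B \<in> lmeasurable" by (simp add: B_def lmeasurable_open)
      have Bpos: "measure lebesgue B > 0" using open_pos_measure[of B] rB_pos by (simp add: B_def)
      define K where "K n = cball xB (rB - inverse (real (Suc n)))" for n
      have Kint: "set_integrable lebesgue (K n) u" for n
      proof -
        have "K n \<subseteq> B" unfolding K_def B_def by (subst cball_subset_ball_iff) auto
        then show ?thesis using L1 BO unfolding L1loc_def by (auto simp: K_def)
      qed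
      have um: "(\<lambda>x. indicator B x *\<^sub>R u x) \<in> borel_measurable lebesgue"
      proof (rule borel_measurable_LIMSEQ_metric)
        show "(\<lambda>x. indicator (K n) x *\<^sub>R u x) \<in> borel_measurable lebesgue" for n
          using Kint[of n] unfolding set_integrable_def by (rule borel_measurable_integrable)
        fix x
        show "(\<lambda>n. indicator (K n) x *\<^sub>R u x) \<longlonglongrightarrow> indicator B x *\<^sub>R u x"
        proof (cases "x \<in> B")
          case False
          have "K n \<subseteq> B" for n unfolding K_def B_def by (subst cball_subset_ball_iff) auto
          then have "x \<notin> K n" for n using False by blast
          then show ?thesis using False by simp
        next
          case True
          then have d: "rB - dist xB x > 0" by (simp add: B_def)
          have "eventually (\<lambda>n. inverse (real (Suc n)) < rB - dist xB x) sequentially"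
            using order_tendstoD(2)[OF LIMSEQ_inverse_real_of_nat d] .
          then have "eventually (\<lambda>n. indicator (K n) x *\<^sub>R u x = indicator B x *\<^sub>R u x) sequentially"
            by (rule eventually_mono) (use True in \<open>auto simp: K_def\<close>)
          then show ?thesis by (rule tendsto_eventually)
        qed
      qed
      from ex_borel_version[OF um] obtain g where g: "g \<in> borel_measurable borel"
        and ug: "AE x in lebesgue. x \<in> B \<longrightarrow> u x = g x" by blast
      have close: "dist x y < r0" if "x \<in> B" "y \<in> B" for x y
      proof -
        have "dist x y \<le> dist x xB + dist xB y" by (rule dist_triangle)
        moreover have "dist x xB < rB" "dist xB y < rB" using that by (auto simp: B_def dist_commute)
        ultimately show ?thesis using rB2 by linarith
      qed
      have uB: "set_integrable lebesgue B u"
        by (rule lemmaB[OF a_nonneg c0_pos a_lower \<phi>_nonneg pm \<beta> c1 AEphi \<Omega>_open order_refl _ BO _ _ close l g ug um])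
           (use rB_pos in \<open>auto simp: B_def\<close>)
      define mu where "mu = avg B u"
      define v where "v x = u x - mu" for x
      have avgshift: "avg B (\<lambda>x. u x - c) = mu - c" for c
        unfolding mu_def by (rule avg_minus_const[OF Bl Bpos uB])
      have "coset_eq \<Omega> u v" unfolding coset_eq_def v_def by auto
      moreover have "avg B v = 0" using avgshift[of mu] by (simp add: v_def[abs_def])
      moreover have "AE x in lebesgue. x \<in> \<Omega> \<longrightarrow> w x = v x" if w: "coset_eq \<Omega> u w" "avg B w = 0" for w
      proof -
        obtain c where c: "AE x in lebesgue. x \<in> \<Omega> \<longrightarrow> u x - w x = c" using w(1) unfolding coset_eq_def by blast
        have ae: "AE x in lebesgue. indicator B x *\<^sub>R (u x - c) = indicator B x *\<^sub>R w x"
          using c by eventually_elim (use BO in \<open>auto simp: indicator_def\<close>)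
        have m1: "(\<lambda>x. indicator B x *\<^sub>R (u x - c)) \<in> borel_measurable lebesgue"
          using set_integral_diff(1)[OF uB set_integrable_const_leb[OF Bl]] unfolding set_integrable_def
          by (rule borel_measurable_integrable)
        have m2: "(\<lambda>x. indicator B x *\<^sub>R w x) \<in> borel_measurable lebesgue"
          by (rule borel_measurable_AE[OF m1 ae])
        have "avg B w = avg B (\<lambda>x. u x - c)"
          unfolding avg_def set_lebesgue_integral_def
          using integral_cong_AE[OF m1 m2 ae] by simp
        then have "mu - c = 0" using w(2) avgshift by simp
        then have cm: "c = mu" by simp
        show ?thesis using c by eventually_elim (use cm in \<open>auto simp: v_def\<close>)
      qed
      ultimately show ?thesis unfolding B_def by blast
    qed
  next
    fix u v assume v: "coset_eq \<Omega> u v \<and> avg (ball xB rB) v = 0"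
    show "ennreal (cmod (avg \<omega> v)) \<le> ennreal C * pnorm \<phi> a \<omega> v"
    proof (cases "set_integrable lebesgue \<omega> v")
      case False
      then have "avg \<omega> v = 0"
        unfolding avg_def set_lebesgue_integral_def set_integrable_def by (simp add: not_integrable_integral_eq)
      then show ?thesis by simp
    next
      case True
      define x where "x = cmod (avg \<omega> v)"
      have bnd: "x \<le> C * l" if "l > 0" "Ffun \<phi> a \<omega> (\<lambda>x. v x / of_real l) \<le> 1" for l
        using Cb[OF that(1) True that(2)] v by (simp add: x_def)
      have "ennreal (x / C) \<le> pnorm \<phi> a \<omega> v"
        unfolding pnorm_def
      proof (rule Inf_greatest)
        fix y assume "y \<in> {ennreal l |l. l > 0 \<and> Ffun \<phi> a \<omega> (\<lambda>x. v x / of_real l) \<le> 1}"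
        then obtain l where l: "y = ennreal l" "l > 0" "Ffun \<phi> a \<omega> (\<lambda>x. v x / of_real l) \<le> 1" by blast
        have "x / C \<le> l" using bnd[OF l(2,3)] Cpos by (simp add: field_simps)
        then show "ennreal (x / C) \<le> y" unfolding l(1) by (rule ennreal_leI)
      qed
      then have "ennreal C * ennreal (x / C) \<le> ennreal C * pnorm \<phi> a \<omega> v"
        by (rule mult_left_mono) simp
      moreover have "ennreal C * ennreal (x / C) = ennreal x"
        using Cpos by (simp add: ennreal_mult[symmetric] x_def)
      ultimately show ?thesis by (simp add: x_def)
    qed
  qed
qed

end
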